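(* Let $k\ge 2$. Every $k$-tree $G$ satisfies $\vec{\chi}(G)\le k$.
   Context: Digraphs have no loops and no parallel arcs, but may contain digons. $\vec{\chi}(G)$ is the dichromatic number (minimum number of colours in a colouring of $V(G)$ with no monochromatic directed cycle). $\Delta_{max}(G)=\max_v\max(d^+(v),d^-(v))$. $\mathcal B_1$ is the set of directed cycles (including digons), $\mathcal B_2$ the set of symmetric cycles of odd length (each edge of an odd undirected cycle replaced by a digon), and for $j\ge 3$, $\mathcal B_j=\{\overleftrightarrow K_{j+1}\}$ (symmetric complete graph on $j+1$ vertices). A digraph $G$ is a direct composition of $G_1,G_2$ on $v_1\in V(G_1)$, $v_2\in V(G_2)$ if obtained from their disjoint union by adding exactly one arc between $v_1$ and $v_2$. $G$ is a cyclic composition of $G_1,\dots,G_\ell$ ($\ell\ge2$) on $v_i\in V(G_i)$ if obtained from their disjoint union by adding arcs $v_iv_{i+1}$ ($1\le i\le \ell-1$) and $v_\ell v_1$. A $k$-tree is a digraph $G$ with $\Delta_{max}(G)\le k$ that can be built by: every member of $\mathcal B_{k-1}$ is a $k$-tree; a direct or cyclic composition of $k$-trees is a $k$-tree. *)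

theory Defs
  imports Main
begin

text \<open>A digraph is a pair (V, A) of a vertex set and an arc set.
  Well-formed digraphs: finite, arcs between vertices, no loops
  (parallel arcs are impossible since A is a set; digons are allowed).\<close>

type_synonym 'a digraph = "'a set \<times> ('a \<times> 'a) set"

definition verts :: "'a digraph \<Rightarrow> 'a set" where "verts G = fst G"
definition arcs :: "'a digraph \<Rightarrow> ('a \<times> 'a) set" where "arcs G = snd G"

definition wf_digraph :: "'a digraph \<Rightarrow> bool" where
  "wf_digraph G \<longleftrightarrow> finite (verts G) \<and> arcs G \<subseteq> verts G \<times> verts G
      \<and> (\<forall>v. (v, v) \<notin> arcs G)"

definition outdeg :: "'a digraph \<Rightarrow> 'a \<Rightarrow> nat" where
  "outdeg G v = card {w. (v, w) \<in> arcs G}"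

definition indeg :: "'a digraph \<Rightarrow> 'a \<Rightarrow> nat" where
  "indeg G v = card {u. (u, v) \<in> arcs G}"

definition delta_max :: "'a digraph \<Rightarrow> nat" where
  "delta_max G = Max ({0} \<union> (\<lambda>v. max (outdeg G v) (indeg G v)) ` verts G)"

definition cycle_arcs :: "'a list \<Rightarrow> ('a \<times> 'a) set" where
  "cycle_arcs vs = {(vs ! i, vs ! ((i + 1) mod length vs)) | i. i < length vs}"

definition is_dicycle_in :: "'a digraph \<Rightarrow> 'a list \<Rightarrow> bool" where
  "is_dicycle_in G vs \<longleftrightarrow> length vs \<ge> 2 \<and> distinct vs \<and> set vs \<subseteq> verts G
     \<and> cycle_arcs vs \<subseteq> arcs G"

definition acyclic_colouring :: "'a digraph \<Rightarrow> nat \<Rightarrow> ('a \<Rightarrow> nat) \<Rightarrow> bool" where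
  "acyclic_colouring G n c \<longleftrightarrow> (\<forall>v\<in>verts G. c v < n)
     \<and> \<not> (\<exists>vs. is_dicycle_in G vs \<and> (\<forall>u\<in>set vs. \<forall>w\<in>set vs. c u = c w))"

definition dichromatic_number :: "'a digraph \<Rightarrow> nat" where
  "dichromatic_number G = (LEAST n. \<exists>c. acyclic_colouring G n c)"

text \<open>The families B_j (as digraphs, i.e. up to the choice of vertex names).\<close>
definition is_directed_cycle :: "'a digraph \<Rightarrow> bool" where
  "is_directed_cycle G \<longleftrightarrow> (\<exists>vs. length vs \<ge> 2 \<and> distinct vs \<and>
      G = (set vs, cycle_arcs vs))"

definition is_sym_odd_cycle :: "'a digraph \<Rightarrow> bool" where
  "is_sym_odd_cycle G \<longleftrightarrow> (\<exists>vs. length vs \<ge> 3 \<and> odd (length vs) \<and> distinct vs \<and>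
      G = (set vs, cycle_arcs vs \<union> (cycle_arcs vs)\<inverse>))"

definition is_sym_complete :: "nat \<Rightarrow> 'a digraph \<Rightarrow> bool" where
  "is_sym_complete m G \<longleftrightarrow> finite (verts G) \<and> card (verts G) = m \<and>
      arcs G = {(x, y). x \<in> verts G \<and> y \<in> verts G \<and> x \<noteq> y}"

definition in_B :: "nat \<Rightarrow> 'a digraph \<Rightarrow> bool" where
  "in_B j G \<longleftrightarrow> (if j = 1 then is_directed_cycle G
                 else if j = 2 then is_sym_odd_cycle G
                 else j \<ge> 3 \<and> is_sym_complete (j + 1) G)"

inductive k_tree :: "nat \<Rightarrow> 'a digraph \<Rightarrow> bool" for k where
  base: "\<lbrakk> in_B (k - 1) G; delta_max G \<le> k \<rbrakk> \<Longrightarrow> k_tree k G"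
| direct: "\<lbrakk> k_tree k G1; k_tree k G2; verts G1 \<inter> verts G2 = {};
     v1 \<in> verts G1; v2 \<in> verts G2; e = (v1, v2) \<or> e = (v2, v1);
     G = (verts G1 \<union> verts G2, arcs G1 \<union> arcs G2 \<union> {e});
     delta_max G \<le> k \<rbrakk> \<Longrightarrow> k_tree k G"
| cyclic: "\<lbrakk> length Gs \<ge> 2; length vs = length Gs;
     \<forall>i < length Gs. k_tree k (Gs ! i);
     \<forall>i < length Gs. \<forall>j < length Gs. i \<noteq> j \<longrightarrow> verts (Gs ! i) \<inter> verts (Gs ! j) = {};
     \<forall>i < length Gs. vs ! i \<in> verts (Gs ! i);
     G = ((\<Union>i < length Gs. verts (Gs ! i)),
          (\<Union>i < length Gs. arcs (Gs ! i)) \<union> cycle_arcs vs);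
     delta_max G \<le> k \<rbrakk> \<Longrightarrow> k_tree k G"

end

theory Submission imports Defs begin

lemma nth_mod_mem: "i < length vs \<Longrightarrow> vs!(j mod length vs) \<in> set vs"
proof -
  assume "i < length vs"
  then have "j mod length vs < length vs" by (intro mod_less_divisor) linarith
  then show ?thesis by simp
qed

lemma cyc_arc_in: "i < length ws \<Longrightarrow> (ws!i, ws!((i+1) mod length ws)) \<in> cycle_arcs ws"
  unfolding cycle_arcs_def by blast

lemma cyc_arc_E: "(x,y) \<in> cycle_arcs ws \<Longrightarrow> \<exists>i<length ws. x = ws!i \<and> y = ws!((i+1) mod length ws)"
  unfolding cycle_arcs_def by blast

lemma potential:
  fixes f :: "'a \<Rightarrow> nat"
  assumes "\<forall>u w. (u,w) \<in> arcs G \<longrightarrow> c u = c w \<longrightarrow> f u < f w"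
  shows "\<not>(\<exists>ws. is_dicycle_in G ws \<and> (\<forall>u\<in>set ws. \<forall>w\<in>set ws. c u = c w))"
proof
  assume "\<exists>ws. is_dicycle_in G ws \<and> (\<forall>u\<in>set ws. \<forall>w\<in>set ws. c u = c w)"
  then obtain ws where d: "is_dicycle_in G ws" and m: "\<forall>u\<in>set ws. \<forall>w\<in>set ws. c u = c w" by blast
  let ?n = "length ws"
  from d have n: "?n \<ge> 2" and ca: "cycle_arcs ws \<subseteq> arcs G" unfolding is_dicycle_in_def by auto
  have fin: "finite (f ` set ws)" "f ` set ws \<noteq> {}" using n by auto
  obtain x where x: "x \<in> set ws" "f x = Max (f ` set ws)" using Max_in[OF fin] by auto
  then obtain i where i: "i < ?n" "ws!i = x" by (auto simp: in_set_conv_nth)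
  let ?y = "ws!((i+1) mod ?n)"
  have y: "?y \<in> set ws" using i(1) by (rule nth_mod_mem)
  have xy: "(x, ?y) \<in> arcs G" using ca cyc_arc_in[OF i(1)] unfolding i(2) by blast
  moreover have cxy: "c x = c ?y" using m x(1) y by blast
  ultimately have "f x < f ?y" using assms by blast
  moreover have "f ?y \<le> Max (f ` set ws)" by (rule Max_ge[OF fin(1)]) (use y in blast)
  ultimately show False using x by auto
qed

lemma proper_acyclic:
  assumes "\<forall>u w. (u,w) \<in> arcs G \<longrightarrow> c u \<noteq> c w"
  shows "\<not>(\<exists>ws. is_dicycle_in G ws \<and> (\<forall>u\<in>set ws. \<forall>w\<in>set ws. c u = c w))"
  by (rule potential[where f="\<lambda>_. 0"]) (use assms in blast)

lemma leave:
  assumes "a < length ws" "ws!a \<in> S" "b < length ws" "ws!b \<notin> S"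
  shows "\<exists>i<length ws. ws!i \<in> S \<and> ws!((i+1) mod length ws) \<notin> S"
proof (rule ccontr)
  assume H: "\<not> ?thesis"
  let ?n = "length ws"
  have "ws!((a+j) mod ?n) \<in> S" for j
  proof (induction j)
    case 0 then show ?case using assms by simp
  next
    case (Suc j)
    have "(a + Suc j) mod ?n = ((a+j) mod ?n + 1) mod ?n" by (simp add: mod_Suc_eq)
    moreover have "(a+j) mod ?n < ?n" by (rule mod_less_divisor) (use assms(1) in linarith)
    ultimately show ?case using H Suc by auto
  qed
  moreover have "a + (?n - a + b) = ?n + b" using assms(1) by simp
  ultimately have "ws!((?n + b) mod ?n) \<in> S" by metis
  then show False using assms by simp
qed

lemma colour_le: "acyclic_colouring G k c \<Longrightarrow> dichromatic_number G \<le> k"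
  unfolding dichromatic_number_def by (rule Least_le) blast

lemma idx_lemma:
  assumes "distinct vs" "i < length vs"
  shows "(THE j. j < length vs \<and> vs!j = vs!i) = i"
  using assms by (auto intro!: the_equality simp: nth_eq_iff_index_eq)

lemma base_cycle:
  assumes "is_directed_cycle G" "k \<ge> 2" shows "\<exists>c. acyclic_colouring G k c"
proof -
  obtain vs where vs: "length vs \<ge> 2" "distinct vs" "G = (set vs, cycle_arcs vs)"
    using assms unfolding is_directed_cycle_def by blast
  define n where "n = length vs"
  define idx where "idx v = (THE i. i < n \<and> vs!i = v)" for v
  have idx: "i < n \<Longrightarrow> idx (vs!i) = i" for i unfolding idx_def n_def by (rule idx_lemma[OF vs(2)])
  define c where "c v = (if idx v = 0 then 1 else 0::nat)" for v
  have "\<forall>u w. (u,w) \<in> arcs G \<longrightarrow> c u = c w \<longrightarrow> idx u < idx w"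
  proof (intro allI impI)
    fix u w assume a: "(u,w) \<in> arcs G" "c u = c w"
    have "(u,w) \<in> cycle_arcs vs" using a(1) vs(3) by (simp add: arcs_def)
    from cyc_arc_E[OF this] obtain i where i: "i < n" "u = vs!i" "w = vs!((i+1) mod n)"
      unfolding n_def by blast
    show "idx u < idx w"
    proof (cases "i+1 < n")
      case True then show ?thesis using i idx by simp
    next
      case False then have "i = n - 1" using i by simp
      then have "(i+1) mod n = 0" using i by simp
      moreover have "0 < n" "i \<noteq> 0" using vs(1) n_def \<open>i = n - 1\<close> by auto
      ultimately show ?thesis using i a(2) idx unfolding c_def by auto
    qed
  qed
  then have "\<not> (\<exists>ws. is_dicycle_in G ws \<and> (\<forall>u\<in>set ws. \<forall>w\<in>set ws. c u = c w))"
    by (rule potential)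
  moreover have "\<forall>v\<in>verts G. c v < k" using assms(2) by (auto simp: c_def)
  ultimately show ?thesis unfolding acyclic_colouring_def by blast
qed

lemma base_odd:
  assumes "is_sym_odd_cycle G" "k \<ge> 3" shows "\<exists>c. acyclic_colouring G k c"
proof -
  obtain vs where vs: "length vs \<ge> 3" "distinct vs" "G = (set vs, cycle_arcs vs \<union> (cycle_arcs vs)\<inverse>)"
    using assms unfolding is_sym_odd_cycle_def by blast
  define n where "n = length vs"
  define idx where "idx v = (THE i. i < n \<and> vs!i = v)" for v
  have idx: "i < n \<Longrightarrow> idx (vs!i) = i" for i unfolding idx_def n_def by (rule idx_lemma[OF vs(2)])
  define c where "c v = (if idx v = n - 1 then 2 else idx v mod 2::nat)" for v
  have one: "c u \<noteq> c w" if hu: "(u,w) \<in> cycle_arcs vs" for u w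
  proof -
    obtain i where i: "i < n" "u = vs!i" "w = vs!((i+1) mod n)"
      using cyc_arc_E[OF hu] unfolding n_def by blast
    show ?thesis
    proof (cases "i+1 < n")
      case True
      have p: "i mod 2 \<noteq> (i+1) mod 2" by presburger
      have l: "i mod 2 < 2" by simp
      have iu: "idx u = i" using i idx by simp
      have iw: "idx w = i + 1" using i idx True by simp
      have cu: "c u = i mod 2" using True unfolding c_def iu by simp
      have cw: "c w = (if i+1 = n-1 then 2 else (i+1) mod 2)" unfolding c_def iw by simp
      show ?thesis unfolding cu cw using p l by (cases "i+1 = n-1") simp_all
    next
      case False then have "i = n - 1" using i by simp
      then have "(i+1) mod n = 0" using i by simp
      moreover have "0 < n" "n - 1 \<noteq> 0" using vs(1) n_def by auto
      ultimately have "idx u = n - 1" "idx w = 0" using i idx \<open>i = n - 1\<close> by simp_all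
      then show ?thesis using \<open>n - 1 \<noteq> 0\<close> unfolding c_def by simp
    qed
  qed
  have "\<forall>u w. (u,w) \<in> arcs G \<longrightarrow> c u \<noteq> c w"
  proof (intro allI impI)
    fix u w assume "(u,w) \<in> arcs G"
    then have "(u,w) \<in> cycle_arcs vs \<or> (w,u) \<in> cycle_arcs vs" using vs(3) by (simp add: arcs_def)
    then show "c u \<noteq> c w" using one by metis
  qed
  then have "\<not> (\<exists>ws. is_dicycle_in G ws \<and> (\<forall>u\<in>set ws. \<forall>w\<in>set ws. c u = c w))"
    by (rule proper_acyclic)
  moreover have "\<forall>v\<in>verts G. c v < k" using assms(2) by (auto simp: c_def)
  ultimately show ?thesis unfolding acyclic_colouring_def by blast
qed

lemma base_complete:
  assumes "is_sym_complete k G" shows "\<exists>c. acyclic_colouring G k c"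
proof -
  have f: "finite (verts G)" "card (verts G) = k"
    and a: "arcs G = {(x, y). x \<in> verts G \<and> y \<in> verts G \<and> x \<noteq> y}"
    using assms unfolding is_sym_complete_def by blast+
  obtain h where h: "bij_betw h (verts G) {0..<k}" using ex_bij_betw_finite_nat[OF f(1)] unfolding f(2) by blast
  have "\<forall>u w. (u,w) \<in> arcs G \<longrightarrow> h u \<noteq> h w"
  proof (intro allI impI)
    fix u w assume "(u,w) \<in> arcs G"
    then have "u \<in> verts G" "w \<in> verts G" "u \<noteq> w" unfolding a by blast+
    then show "h u \<noteq> h w" using h unfolding bij_betw_def inj_on_def by blast
  qed
  then have "\<not> (\<exists>ws. is_dicycle_in G ws \<and> (\<forall>u\<in>set ws. \<forall>w\<in>set ws. h u = h w))"
    by (rule proper_acyclic)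
  moreover have "\<forall>v\<in>verts G. h v < k" using h unfolding bij_betw_def by fastforce
  ultimately show ?thesis unfolding acyclic_colouring_def by blast
qed

lemma base_all:
  assumes "in_B (k - 1) G" "k \<ge> 2" shows "\<exists>c. acyclic_colouring G k c"
proof -
  consider "k = 2" | "k = 3" | "k \<ge> 4" using assms(2) by linarith
  then show ?thesis
  proof cases
    case 1 then have "is_directed_cycle G" using assms unfolding in_B_def by simp
    then show ?thesis using base_cycle assms(2) by blast
  next
    case 2 then have "is_sym_odd_cycle G" using assms unfolding in_B_def by simp
    then show ?thesis using base_odd[of G 3] 2 by simp
  next
    case 3
    then have e: "k - 1 + 1 = k" "k - 1 \<noteq> 1" "k - 1 \<noteq> 2" by auto
    then have "is_sym_complete k G" using assms unfolding in_B_def by (simp only: e if_False)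
    then show ?thesis by (rule base_complete)
  qed
qed

lemma cyc_sub: "cycle_arcs vs \<subseteq> set vs \<times> set vs"
proof
  fix p assume "p \<in> cycle_arcs vs"
  then obtain x y where p: "p = (x,y)" "(x,y) \<in> cycle_arcs vs" by (cases p) auto
  from cyc_arc_E[OF p(2)] obtain i where i: "i < length vs" "x = vs!i" "y = vs!((i+1) mod length vs)" by blast
  have "x \<in> set vs" using i(1,2) by simp
  moreover have "y \<in> set vs" unfolding i(3) by (rule nth_mod_mem[OF i(1)])
  ultimately show "p \<in> set vs \<times> set vs" using p(1) by simp
qed

lemma sym_sub: "C \<subseteq> S \<times> S \<Longrightarrow> C \<union> C\<inverse> \<subseteq> S \<times> S" by blast

lemma base_arcs: "in_B j G \<Longrightarrow> arcs G \<subseteq> verts G \<times> verts G"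
proof -
  assume h: "in_B j G"
  have "is_directed_cycle G \<or> is_sym_odd_cycle G \<or> is_sym_complete (j+1) G"
  proof (cases "j = 1")
    case True then show ?thesis using h unfolding in_B_def by simp
  next
    case False
    then have "(if j = 2 then is_sym_odd_cycle G else j \<ge> 3 \<and> is_sym_complete (j + 1) G)"
      using h unfolding in_B_def by simp
    then show ?thesis by (cases "j = 2") simp_all
  qed
  then show ?thesis
  proof (elim disjE)
    assume "is_directed_cycle G"
    then obtain vs where g: "G = (set vs, cycle_arcs vs)" unfolding is_directed_cycle_def by blast
    have "arcs G = cycle_arcs vs" "verts G = set vs" using g by (simp_all add: arcs_def verts_def)
    then show ?thesis using cyc_sub[of vs] by simp
  next
    assume "is_sym_odd_cycle G"
    then obtain vs where g: "G = (set vs, cycle_arcs vs \<union> (cycle_arcs vs)\<inverse>)"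
      unfolding is_sym_odd_cycle_def by blast
    have "arcs G = cycle_arcs vs \<union> (cycle_arcs vs)\<inverse>" "verts G = set vs" using g by (simp_all add: arcs_def verts_def)
    then show ?thesis using sym_sub[OF cyc_sub[of vs]] by simp
  next
    assume "is_sym_complete (j+1) G"
    then have "arcs G = {(x, y). x \<in> verts G \<and> y \<in> verts G \<and> x \<noteq> y}"
      unfolding is_sym_complete_def by blast
    then show ?thesis by (simp add: subset_iff)
  qed
qed


lemma restrict_cycle:
  assumes "is_dicycle_in G ws" "set ws \<subseteq> verts H"
    and "\<forall>x y. (x,y) \<in> arcs G \<longrightarrow> x \<in> verts H \<longrightarrow> y \<in> verts H \<longrightarrow> (x,y) \<in> arcs H"
  shows "is_dicycle_in H ws"
proof -
  have d: "length ws \<ge> 2" "distinct ws" "cycle_arcs ws \<subseteq> arcs G"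
    using assms(1) unfolding is_dicycle_in_def by auto
  have "cycle_arcs ws \<subseteq> arcs H"
  proof
    fix p assume p: "p \<in> cycle_arcs ws"
    obtain x y where xy: "p = (x,y)" by (cases p)
    have "x \<in> set ws" "y \<in> set ws" using cyc_sub[of ws] p xy by auto
    moreover have "(x,y) \<in> arcs G" using d(3) p xy by auto
    ultimately show "p \<in> arcs H" using assms(2,3) xy by blast
  qed
  then show ?thesis using d assms(2) unfolding is_dicycle_in_def by auto
qed

lemma leave_arc:
  assumes "is_dicycle_in G ws" "x \<in> set ws" "x \<in> S" "y \<in> set ws" "y \<notin> S"
  shows "\<exists>p q. (p,q) \<in> arcs G \<and> p \<in> set ws \<and> q \<in> set ws \<and> p \<in> S \<and> q \<notin> S"
proof -
  obtain a where a: "a < length ws" "ws!a = x" using assms(2) by (auto simp: in_set_conv_nth)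
  obtain b where b: "b < length ws" "ws!b = y" using assms(4) by (auto simp: in_set_conv_nth)
  obtain i where i: "i < length ws" "ws!i \<in> S" "ws!((i+1) mod length ws) \<notin> S"
    using leave[of a ws S b] a b assms(3,5) by blast
  have "(ws!i, ws!((i+1) mod length ws)) \<in> arcs G"
    using cyc_arc_in[OF i(1)] assms(1) unfolding is_dicycle_in_def by blast
  moreover have "ws!i \<in> set ws" using i(1) by simp
  moreover have "ws!((i+1) mod length ws) \<in> set ws" by (rule nth_mod_mem[OF i(1)])
  ultimately show ?thesis using i by blast
qed

lemma direct_step:
  assumes a1: "arcs G1 \<subseteq> verts G1 \<times> verts G1" and a2: "arcs G2 \<subseteq> verts G2 \<times> verts G2"
    and c1: "acyclic_colouring G1 k c1" and c2: "acyclic_colouring G2 k c2"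
    and disj: "verts G1 \<inter> verts G2 = {}" and v1: "v1 \<in> verts G1" and v2: "v2 \<in> verts G2"
    and e: "e = (v1,v2) \<or> e = (v2,v1)"
    and G: "G = (verts G1 \<union> verts G2, arcs G1 \<union> arcs G2 \<union> {e})"
  shows "arcs G \<subseteq> verts G \<times> verts G \<and> (\<exists>c. acyclic_colouring G k c)"
proof -
  have vG: "verts G = verts G1 \<union> verts G2" and aG: "arcs G = arcs G1 \<union> arcs G2 \<union> {e}"
    using G by (simp_all add: verts_def arcs_def)
  have "e \<in> verts G \<times> verts G" using e v1 v2 vG by auto
  then have arcsG: "arcs G \<subseteq> verts G \<times> verts G" using a1 a2 aG vG by auto
  define c where "c v = (if v \<in> verts G1 then c1 v else c2 v)" for v
  have bound: "\<forall>v\<in>verts G. c v < k" using c1 c2 unfolding acyclic_colouring_def vG c_def by auto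
  have arcE: "(x,y) \<in> arcs G1 \<or> (x,y) \<in> arcs G2 \<or> (x,y) = e" if "(x,y) \<in> arcs G" for x y
    using that aG by auto
  have nocyc: "\<not>(\<exists>ws. is_dicycle_in G ws \<and> (\<forall>u\<in>set ws. \<forall>w\<in>set ws. c u = c w))"
  proof
    assume "\<exists>ws. is_dicycle_in G ws \<and> (\<forall>u\<in>set ws. \<forall>w\<in>set ws. c u = c w)"
    then obtain ws where d: "is_dicycle_in G ws" and m: "\<forall>u\<in>set ws. \<forall>w\<in>set ws. c u = c w" by blast
    have sw: "set ws \<subseteq> verts G" using d unfolding is_dicycle_in_def by auto
    show False
    proof (cases "set ws \<subseteq> verts G1")
      case True
      have "is_dicycle_in G1 ws"
      proof (rule restrict_cycle[OF d True], intro allI impI)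
        fix x y assume xy: "(x,y) \<in> arcs G" "x \<in> verts G1" "y \<in> verts G1"
        have "(x,y) \<notin> arcs G2" using a2 xy(2) disj by blast
        moreover have "(x,y) \<noteq> e" using e xy(2,3) v2 disj by blast
        ultimately show "(x,y) \<in> arcs G1" using arcE[OF xy(1)] by blast
      qed
      moreover have "\<forall>u\<in>set ws. \<forall>w\<in>set ws. c1 u = c1 w" using m True unfolding c_def by (metis subsetD)
      ultimately show False using c1 unfolding acyclic_colouring_def by blast
    next
      case F1: False
      show False
      proof (cases "set ws \<subseteq> verts G2")
        case True
        have "is_dicycle_in G2 ws"
        proof (rule restrict_cycle[OF d True], intro allI impI)
          fix x y assume xy: "(x,y) \<in> arcs G" "x \<in> verts G2" "y \<in> verts G2"
          have "(x,y) \<notin> arcs G1" using a1 xy(2) disj by blast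
          moreover have "(x,y) \<noteq> e" using e xy(2,3) v1 disj by blast
          ultimately show "(x,y) \<in> arcs G2" using arcE[OF xy(1)] by blast
        qed
        moreover have "\<forall>u\<in>set ws. \<forall>w\<in>set ws. c2 u = c2 w"
          using m True disj unfolding c_def by (metis disjoint_iff subsetD)
        ultimately show False using c2 unfolding acyclic_colouring_def by blast
      next
        case False
        obtain x where x: "x \<in> set ws" "x \<notin> verts G1" using F1 by blast
        obtain y where y: "y \<in> set ws" "y \<notin> verts G2" using False by blast
        have x2: "x \<in> verts G2" using x sw vG by blast
        have y1: "y \<in> verts G1" using y sw vG by blast
        obtain p q where pq: "(p,q) \<in> arcs G" "p \<in> verts G1" "q \<notin> verts G1"
          using leave_arc[OF d y(1) y1 x(1) x(2)] by blast
        obtain p' q' where pq': "(p',q') \<in> arcs G" "p' \<in> verts G2" "q' \<notin> verts G2"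
          using leave_arc[OF d x(1) x2 y(1) y(2)] by blast
        have "(p,q) \<notin> arcs G1" using a1 pq(3) by blast
        moreover have "(p,q) \<notin> arcs G2" using a2 pq(2) disj by blast
        ultimately have "(p,q) = e" using arcE[OF pq(1)] by blast
        have "(p',q') \<notin> arcs G2" using a2 pq'(3) by blast
        moreover have "(p',q') \<notin> arcs G1" using a1 pq'(2) disj by blast
        ultimately have "(p',q') = e" using arcE[OF pq'(1)] by blast
        then have "p = p'" using \<open>(p,q) = e\<close> by (metis prod.inject)
        then show False using pq(2) pq'(2) disj by blast
      qed
    qed
  qed
  show ?thesis using arcsG bound nocyc unfolding acyclic_colouring_def by blast
qed


lemma swap_colouring:
  assumes "acyclic_colouring H k c" "inj \<sigma>" "\<forall>x<k. \<sigma> x < k"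
  shows "acyclic_colouring H k (\<sigma> \<circ> c)"
proof -
  have b: "\<forall>v\<in>verts H. c v < k" and n: "\<not> (\<exists>vs. is_dicycle_in H vs \<and> (\<forall>u\<in>set vs. \<forall>w\<in>set vs. c u = c w))"
    using assms(1) unfolding acyclic_colouring_def by blast+
  have "\<forall>v\<in>verts H. (\<sigma> \<circ> c) v < k" using b assms(3) by simp
  moreover have "\<not> (\<exists>vs. is_dicycle_in H vs \<and> (\<forall>u\<in>set vs. \<forall>w\<in>set vs. (\<sigma> \<circ> c) u = (\<sigma> \<circ> c) w))"
    using n assms(2) unfolding inj_def comp_def by blast
  ultimately show ?thesis unfolding acyclic_colouring_def by blast
qed

lemma cyclic_step:
  assumes L2: "length Gs \<ge> 2" and Lvs: "length vs = length Gs"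
  and IH: "\<forall>i<length Gs. arcs (Gs!i) \<subseteq> verts (Gs!i) \<times> verts (Gs!i) \<and> (\<exists>c. acyclic_colouring (Gs!i) k c)"
  and disj: "\<forall>i<length Gs. \<forall>j<length Gs. i \<noteq> j \<longrightarrow> verts (Gs!i) \<inter> verts (Gs!j) = {}"
  and vsin: "\<forall>i<length Gs. vs!i \<in> verts (Gs!i)"
  and G: "G = ((\<Union>i<length Gs. verts (Gs!i)), (\<Union>i<length Gs. arcs (Gs!i)) \<union> cycle_arcs vs)"
  and k: "k \<ge> 2"
  shows "arcs G \<subseteq> verts G \<times> verts G \<and> (\<exists>c. acyclic_colouring G k c)"
proof -
  define L where "L = length Gs"
  define V where "V i = verts (Gs!i)" for i
  have L2': "L \<ge> 2" using L2 L_def by simp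
  have vG: "verts G = (\<Union>i<L. V i)" and aG: "arcs G = (\<Union>i<L. arcs (Gs!i)) \<union> cycle_arcs vs"
    using G unfolding L_def V_def by (simp_all add: verts_def arcs_def)
  have arcsi: "i < L \<Longrightarrow> arcs (Gs!i) \<subseteq> V i \<times> V i" for i using IH unfolding L_def V_def by blast
  have disj': "i < L \<Longrightarrow> j < L \<Longrightarrow> x \<in> V i \<Longrightarrow> x \<in> V j \<Longrightarrow> i = j" for i j x
    using disj unfolding L_def V_def by blast
  have vsin': "i < L \<Longrightarrow> vs!i \<in> V i" for i using vsin unfolding L_def V_def by blast
  have LvsL: "length vs = L" using Lvs L_def by simp
  have modL: "(m::nat) mod L < L" for m using L2' by simp
  have arcAt: "(y \<in> V j \<and> (x,y) \<in> arcs (Gs!j)) \<or> (x = vs!j \<and> y = vs!((j+1) mod L))"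
    if xy: "(x,y) \<in> arcs G" "x \<in> V j" "j < L" for x y j
  proof -
    have "(\<exists>m<L. (x,y) \<in> arcs (Gs!m)) \<or> (x,y) \<in> cycle_arcs vs" using xy(1) aG by auto
    then show ?thesis
    proof
      assume "\<exists>m<L. (x,y) \<in> arcs (Gs!m)"
      then obtain m where m: "m < L" "(x,y) \<in> arcs (Gs!m)" by blast
      then have "x \<in> V m" "y \<in> V m" using arcsi[OF m(1)] by auto
      then have "m = j" using disj'[OF m(1) xy(3)] xy(2) by blast
      then show ?thesis using m \<open>y \<in> V m\<close> by blast
    next
      assume "(x,y) \<in> cycle_arcs vs"
      from cyc_arc_E[OF this] obtain m where m: "m < L" "x = vs!m" "y = vs!((m+1) mod L)"
        unfolding LvsL by blast
      then have "x \<in> V m" using vsin' by simp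
      then have "m = j" using disj'[OF m(1) xy(3)] xy(2) by blast
      then show ?thesis using m by blast
    qed
  qed
  have arcsG: "arcs G \<subseteq> verts G \<times> verts G"
  proof
    fix p assume p: "p \<in> arcs G"
    obtain x y where xy: "p = (x,y)" by (cases p)
    have "(\<exists>m<L. (x,y) \<in> arcs (Gs!m)) \<or> (x,y) \<in> cycle_arcs vs" using p xy aG by auto
    then have "\<exists>m<L. \<exists>m'<L. x \<in> V m \<and> y \<in> V m'"
    proof
      assume "\<exists>m<L. (x,y) \<in> arcs (Gs!m)"
      then obtain m where m: "m < L" "(x,y) \<in> arcs (Gs!m)" by blast
      then show ?thesis using arcsi[OF m(1)] by blast
    next
      assume "(x,y) \<in> cycle_arcs vs"
      from cyc_arc_E[OF this] obtain m where m: "m < L" "x = vs!m" "y = vs!((m+1) mod L)"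
        unfolding LvsL by blast
      then show ?thesis using vsin'[OF m(1)] vsin'[OF modL[of "m+1"]] modL[of "m+1"] by blast
    qed
    then show "p \<in> verts G \<times> verts G" using xy vG by auto
  qed
  have "\<forall>i. \<exists>c. i < L \<longrightarrow> acyclic_colouring (Gs!i) k c" using IH unfolding L_def by blast
  from choice[OF this] obtain cs where cs: "\<And>i. i < L \<Longrightarrow> acyclic_colouring (Gs!i) k (cs i)" by blast
  define a where "a = cs 1 (vs!1)"
  define b where "b = cs 0 (vs!0)"
  define a' where "a' = (if a = 0 then 1 else (0::nat))"
  define \<sigma> where "\<sigma> x = (if x = a then a' else if x = a' then a else x)" for x
  define d where "d i = (if i = 0 \<and> b = a then \<sigma> \<circ> cs 0 else cs i)" for i
  have aa': "a \<noteq> a'" unfolding a'_def by simp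
  have ak: "a < k" using cs[of 1] vsin'[of 1] L2' unfolding a_def acyclic_colouring_def V_def by auto
  have a'k: "a' < k" using k unfolding a'_def by simp
  have inj: "inj \<sigma>" unfolding inj_def \<sigma>_def using aa' by auto
  have sk: "\<forall>x<k. \<sigma> x < k" unfolding \<sigma>_def using ak a'k by auto
  have dcol: "i < L \<Longrightarrow> acyclic_colouring (Gs!i) k (d i)" for i
    unfolding d_def using cs swap_colouring[OF cs inj sk] by auto
  have F2: "d 0 (vs!0) \<noteq> d 1 (vs!1)"
  proof (cases "b = a")
    case True
    then have "d 0 (vs!0) = a'" unfolding d_def \<sigma>_def b_def by simp
    moreover have "d 1 (vs!1) = a" unfolding d_def a_def by simp
    ultimately show ?thesis using aa' by simp
  next
    case False
    then show ?thesis unfolding d_def a_def b_def by simp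
  qed
  define idx where "idx v = (THE i. i < L \<and> v \<in> V i)" for v
  have idx: "i < L \<Longrightarrow> v \<in> V i \<Longrightarrow> idx v = i" for i v
    unfolding idx_def by (rule the_equality) (use disj' in blast)+
  define c where "c v = d (idx v) v" for v
  have cV: "i < L \<Longrightarrow> v \<in> V i \<Longrightarrow> c v = d i v" for i v unfolding c_def using idx by simp
  have bound: "\<forall>v\<in>verts G. c v < k"
  proof
    fix v assume "v \<in> verts G"
    then obtain i where i: "i < L" "v \<in> V i" using vG by auto
    then show "c v < k" using cV[OF i] dcol[OF i(1)] unfolding acyclic_colouring_def V_def by auto
  qed
  have nocyc: "\<not>(\<exists>ws. is_dicycle_in G ws \<and> (\<forall>u\<in>set ws. \<forall>w\<in>set ws. c u = c w))"
  proof
    assume "\<exists>ws. is_dicycle_in G ws \<and> (\<forall>u\<in>set ws. \<forall>w\<in>set ws. c u = c w)"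
    then obtain ws where dc: "is_dicycle_in G ws" and m: "\<forall>u\<in>set ws. \<forall>w\<in>set ws. c u = c w" by blast
    have sw: "set ws \<subseteq> verts G" and lw: "length ws \<ge> 2" using dc unfolding is_dicycle_in_def by auto
    show False
    proof (cases "\<exists>i<L. set ws \<subseteq> V i")
      case True
      then obtain i where i: "i < L" "set ws \<subseteq> V i" by blast
      have "is_dicycle_in (Gs!i) ws"
      proof (rule restrict_cycle[OF dc], unfold V_def[symmetric])
        show "set ws \<subseteq> V i" by (rule i(2))
        show "\<forall>x y. (x, y) \<in> arcs G \<longrightarrow> x \<in> V i \<longrightarrow> y \<in> V i \<longrightarrow> (x, y) \<in> arcs (Gs ! i)"
        proof (intro allI impI)
          fix x y assume xy: "(x,y) \<in> arcs G" "x \<in> V i" "y \<in> V i"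
          show "(x,y) \<in> arcs (Gs!i)"
          proof (rule ccontr)
            assume "(x,y) \<notin> arcs (Gs!i)"
            then have "y = vs!((i+1) mod L)" using arcAt[OF xy(1,2) i(1)] by blast
            then have "y \<in> V ((i+1) mod L)" using vsin'[OF modL] by simp
            then have "(i+1) mod L = i" using disj'[OF modL i(1)] xy(3) by blast
            moreover have "(i+1) mod L \<noteq> i"
            proof (cases "i + 1 < L")
              case True then show ?thesis by simp
            next
              case False then have "i + 1 = L" using i(1) by simp
              then show ?thesis using L2' by simp
            qed
            ultimately show False by simp
          qed
        qed
      qed
      moreover have "\<forall>u\<in>set ws. \<forall>w\<in>set ws. d i u = d i w" using m i cV by (metis subsetD)
      ultimately show False using dcol[OF i(1)] unfolding acyclic_colouring_def by blast
    next
      case False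
      have step: "vs!((j+1) mod L) \<in> set ws" if j: "j < L" "vs!j \<in> set ws" for j
      proof -
        obtain y where y: "y \<in> set ws" "y \<notin> V j" using False j(1) by blast
        obtain p q where pq: "(p,q) \<in> arcs G" "q \<in> set ws" "p \<in> V j" "q \<notin> V j"
          using leave_arc[OF dc j(2) vsin'[OF j(1)] y] by blast
        show ?thesis using arcAt[OF pq(1) pq(3) j(1)] pq(2,4) by blast
      qed
      have "ws ! 0 \<in> set ws" using lw by (intro nth_mem) linarith
      then obtain i where i: "i < L" "ws!0 \<in> V i" using sw vG by blast
      obtain y where y: "y \<in> set ws" "y \<notin> V i" using False i(1) by blast
      obtain p q where pq: "(p,q) \<in> arcs G" "p \<in> set ws" "p \<in> V i" "q \<notin> V i"
        using leave_arc[OF dc \<open>ws!0 \<in> set ws\<close> i(2) y] by blast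
      have "p = vs!i" using arcAt[OF pq(1) pq(3) i(1)] pq(4) by blast
      then have i0: "vs!i \<in> set ws" using pq(2) by simp
      have all: "vs!((i+n) mod L) \<in> set ws" for n
      proof (induction n)
        case 0 then show ?case using i0 i(1) by simp
      next
        case (Suc n)
        have "(i + Suc n) mod L = ((i+n) mod L + 1) mod L" by (simp add: mod_Suc_eq)
        then show ?case using step[OF modL Suc] by simp
      qed
      have "(i + (L - i)) mod L = 0" using i(1) by simp
      then have v0: "vs!0 \<in> set ws" using all[of "L - i"] by simp
      have e1: "i + (L - i + 1) = 1 + L" using i(1) by simp
      have "(1 + L) mod L = 1 mod L" by (rule mod_add_self2)
      also have "\<dots> = 1" using L2' by simp
      finally have "(i + (L - i + 1)) mod L = 1" unfolding e1 .
      then have v1: "vs!1 \<in> set ws" using all[of "L - i + 1"] by simp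
      have "c (vs!0) = c (vs!1)" using m v0 v1 by blast
      moreover have "c (vs!0) = d 0 (vs!0)" using cV[OF _ vsin'] L2' by simp
      moreover have "c (vs!1) = d 1 (vs!1)" using cV[OF _ vsin'] L2' by simp
      ultimately show False using F2 by simp
    qed
  qed
  show ?thesis using arcsG bound nocyc unfolding acyclic_colouring_def by blast
qed


lemma main_inv:
  assumes "k_tree k G" "k \<ge> 2"
  shows "arcs G \<subseteq> verts G \<times> verts G \<and> (\<exists>c. acyclic_colouring G k c)"
  using assms
proof (induction rule: k_tree.induct)
  case (base G)
  then show ?case using base_arcs base_all by blast
next
  case (direct G1 G2 v1 v2 e G)
  then obtain c1 c2 where "acyclic_colouring G1 k c1" "acyclic_colouring G2 k c2" by blast
  then show ?case using direct_step[of G1 G2 k c1 c2 v1 v2 e G] direct by blast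
next
  case (cyclic Gs vs G)
  have IH: "\<forall>i<length Gs. arcs (Gs!i) \<subseteq> verts (Gs!i) \<times> verts (Gs!i) \<and> (\<exists>c. acyclic_colouring (Gs!i) k c)"
    using cyclic by auto
  show ?case using cyclic_step[OF cyclic(1,2) IH] cyclic by blast
qed

theorem mainTheorem6:
  fixes k :: nat and G :: "'a digraph"
  assumes "k \<ge> 2" and "k_tree k G"
  shows "dichromatic_number G \<le> k"
proof -
  obtain c where "acyclic_colouring G k c" using main_inv[OF assms(2,1)] by blast
  then show ?thesis by (rule colour_le)
qed

end
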